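(* Let $n\ge 3$ and let $M_n$ be the lattice consisting of $0$, $1$ and $n$ pairwise incomparable elements $a_1,\dots,a_n$ (with $0<a_i<1$ for all $i$). For each $i$ and any two distinct indices $j,k$ different from $i$, one has $\chi_{a_i}(x)=\big((x\wedge a_i)\vee a_j\big)\wedge\big((x\wedge a_i)\vee a_k\big)$ for all $x\in M_n$. Consequently $\mathsf{C}(M_n)=\mathsf{Pol}_{0,1}(M_n)$.
   Context: For $a\in L$, $\chi_a:L\to L$ is defined by $\chi_a(x)=1$ if $x\ge a$ and $x\ne0$, and $\chi_a(x)=0$ otherwise. An $n$-ary aggregation function on a bounded lattice $L$ ($n\ge1$) is a nondecreasing map $A:L^n\to L$ with $A(0,\dots,0)=0$, $A(1,\dots,1)=1$; $\mathsf{C}(L)$ is the set of all of them. Polynomials on $L$ are functions $L^n\to L$ built from projections and constants by finitely many pointwise joins and meets; $\mathsf{Pol}_{0,1}(L)$ is the set of polynomials preserving $0$ and $1$. *)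

theory Defs
  imports Main
begin

text \<open>The lattice M_n: elements 0 (Bot), 1 (Top) and atoms a_1..a_n (At 1 .. At n).
  The meet/join below are defined on the whole datatype; the carrier of M_n is mn_carrier n.\<close>

datatype mn = Bot | Top | At nat

fun mmeet :: "mn \<Rightarrow> mn \<Rightarrow> mn" where
  "mmeet Bot y = Bot"
| "mmeet x Bot = Bot"
| "mmeet Top y = y"
| "mmeet x Top = x"
| "mmeet (At i) (At j) = (if i = j then At i else Bot)"

fun mjoin :: "mn \<Rightarrow> mn \<Rightarrow> mn" where
  "mjoin Top y = Top"
| "mjoin x Top = Top"
| "mjoin Bot y = y"
| "mjoin x Bot = x"
| "mjoin (At i) (At j) = (if i = j then At i else Top)"

definition mleq :: "mn \<Rightarrow> mn \<Rightarrow> bool" where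
  "mleq x y \<longleftrightarrow> mmeet x y = x"

definition mn_carrier :: "nat \<Rightarrow> mn set" where
  "mn_carrier n = {Bot, Top} \<union> {At i | i. 1 \<le> i \<and> i \<le> n}"

definition chi :: "mn \<Rightarrow> mn \<Rightarrow> mn" where
  "chi a x = (if mleq a x \<and> x \<noteq> Bot then Top else Bot)"

definition tuples :: "nat \<Rightarrow> nat \<Rightarrow> mn list set" where
  "tuples n k = {xs. length xs = k \<and> set xs \<subseteq> mn_carrier n}"

definition tleq :: "mn list \<Rightarrow> mn list \<Rightarrow> bool" where
  "tleq xs ys \<longleftrightarrow> length xs = length ys \<and> (\<forall>i < length xs. mleq (xs ! i) (ys ! i))"

text \<open>k-ary aggregation functions on M_n (the set C(M_n) restricted to arity k).\<close>
definition aggregation :: "nat \<Rightarrow> nat \<Rightarrow> (mn list \<Rightarrow> mn) \<Rightarrow> bool" where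
  "aggregation n k f \<longleftrightarrow>
     (\<forall>xs \<in> tuples n k. f xs \<in> mn_carrier n)
   \<and> (\<forall>xs \<in> tuples n k. \<forall>ys \<in> tuples n k. tleq xs ys \<longrightarrow> mleq (f xs) (f ys))
   \<and> f (replicate k Bot) = Bot \<and> f (replicate k Top) = Top"

inductive_set pol :: "nat \<Rightarrow> nat \<Rightarrow> (mn list \<Rightarrow> mn) set" for n k where
  proj: "i < k \<Longrightarrow> (\<lambda>xs. xs ! i) \<in> pol n k"
| const: "c \<in> mn_carrier n \<Longrightarrow> (\<lambda>xs. c) \<in> pol n k"
| join: "p \<in> pol n k \<Longrightarrow> q \<in> pol n k \<Longrightarrow> (\<lambda>xs. mjoin (p xs) (q xs)) \<in> pol n k"
| meet: "p \<in> pol n k \<Longrightarrow> q \<in> pol n k \<Longrightarrow> (\<lambda>xs. mmeet (p xs) (q xs)) \<in> pol n k"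

definition pol01 :: "nat \<Rightarrow> nat \<Rightarrow> (mn list \<Rightarrow> mn) \<Rightarrow> bool" where
  "pol01 n k f \<longleftrightarrow>
     (\<exists>p \<in> pol n k. \<forall>xs \<in> tuples n k. f xs = p xs)
   \<and> f (replicate k Bot) = Bot \<and> f (replicate k Top) = Top"

end

theory Submission
  imports Defs
begin

lemma mleq_refl: "mleq x x" by (cases x) (auto simp: mleq_def)
lemma mleq_antisym: "mleq x y \<Longrightarrow> mleq y x \<Longrightarrow> x = y"
  by (cases x; cases y) (auto simp: mleq_def split: if_splits)
lemma mleq_trans: "mleq x y \<Longrightarrow> mleq y z \<Longrightarrow> mleq x z"
  by (cases x; cases y; cases z) (auto simp: mleq_def split: if_splits)
lemma mleq_Bot[simp]: "mleq Bot x" by (cases x) (auto simp: mleq_def)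
lemma mjoin_lub: "mleq x u \<Longrightarrow> mleq y u \<Longrightarrow> mleq (mjoin x y) u"
  by (cases x; cases y; cases u) (auto simp: mleq_def split: if_splits)
lemma mjoin_up1: "mleq x (mjoin x y)"
  by (cases x; cases y) (auto simp: mleq_def split: if_splits)
lemma mjoin_up2: "mleq y (mjoin x y)"
  by (cases x; cases y) (auto simp: mleq_def split: if_splits)
lemma mjoin_mono: "mleq a b \<Longrightarrow> mleq c d \<Longrightarrow> mleq (mjoin a c) (mjoin b d)"
  by (cases a; cases b; cases c; cases d) (auto simp: mleq_def split: if_splits)
lemma mmeet_mono: "mleq a b \<Longrightarrow> mleq c d \<Longrightarrow> mleq (mmeet a c) (mmeet b d)"
  by (cases a; cases b; cases c; cases d) (auto simp: mleq_def split: if_splits)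
lemma mmeet_Top[simp]: "mmeet x Top = x" by (cases x) auto
lemma mmeet_Bot[simp]: "mmeet x Bot = Bot" by (cases x) auto

definition polyish :: "nat \<Rightarrow> nat \<Rightarrow> (mn list \<Rightarrow> mn) \<Rightarrow> bool" where
  "polyish n m g \<longleftrightarrow> (\<exists>p \<in> pol n m. \<forall>xs \<in> tuples n m. g xs = p xs)"

lemma polyish_of_pol: "p \<in> pol n m \<Longrightarrow> polyish n m p"
  unfolding polyish_def by (rule bexI[of _ p]) simp_all
lemma polyish_proj: "i < m \<Longrightarrow> polyish n m (\<lambda>xs. xs ! i)"
  by (rule polyish_of_pol) (rule pol.proj)
lemma polyish_const: "c \<in> mn_carrier n \<Longrightarrow> polyish n m (\<lambda>xs. c)"
  by (rule polyish_of_pol) (rule pol.const)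
lemma polyish_join: "polyish n m g \<Longrightarrow> polyish n m h \<Longrightarrow> polyish n m (\<lambda>xs. mjoin (g xs) (h xs))"
  unfolding polyish_def
proof -
  assume "\<exists>p\<in>pol n m. \<forall>xs\<in>tuples n m. g xs = p xs" "\<exists>p\<in>pol n m. \<forall>xs\<in>tuples n m. h xs = p xs"
  then obtain p q where pq: "p \<in> pol n m" "q \<in> pol n m" "\<forall>xs\<in>tuples n m. g xs = p xs" "\<forall>xs\<in>tuples n m. h xs = q xs" by blast
  show "\<exists>p\<in>pol n m. \<forall>xs\<in>tuples n m. mjoin (g xs) (h xs) = p xs"
  proof (rule bexI[of _ "\<lambda>xs. mjoin (p xs) (q xs)"])
    show "(\<lambda>xs. mjoin (p xs) (q xs)) \<in> pol n m" using pq(1,2) by (rule pol.join)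
    show "\<forall>xs\<in>tuples n m. mjoin (g xs) (h xs) = mjoin (p xs) (q xs)" using pq(3,4) by simp
  qed
qed
lemma polyish_meet: "polyish n m g \<Longrightarrow> polyish n m h \<Longrightarrow> polyish n m (\<lambda>xs. mmeet (g xs) (h xs))"
  unfolding polyish_def
proof -
  assume "\<exists>p\<in>pol n m. \<forall>xs\<in>tuples n m. g xs = p xs" "\<exists>p\<in>pol n m. \<forall>xs\<in>tuples n m. h xs = p xs"
  then obtain p q where pq: "p \<in> pol n m" "q \<in> pol n m" "\<forall>xs\<in>tuples n m. g xs = p xs" "\<forall>xs\<in>tuples n m. h xs = q xs" by blast
  show "\<exists>p\<in>pol n m. \<forall>xs\<in>tuples n m. mmeet (g xs) (h xs) = p xs"
  proof (rule bexI[of _ "\<lambda>xs. mmeet (p xs) (q xs)"])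
    show "(\<lambda>xs. mmeet (p xs) (q xs)) \<in> pol n m" using pq(1,2) by (rule pol.meet)
    show "\<forall>xs\<in>tuples n m. mmeet (g xs) (h xs) = mmeet (p xs) (q xs)" using pq(3,4) by simp
  qed
qed
lemma polyish_cong: "polyish n m g \<Longrightarrow> (\<And>xs. xs \<in> tuples n m \<Longrightarrow> g xs = h xs) \<Longrightarrow> polyish n m h"
proof -
  assume "polyish n m g" and gh: "\<And>xs. xs \<in> tuples n m \<Longrightarrow> g xs = h xs"
  then obtain p where p: "p \<in> pol n m" "\<forall>xs\<in>tuples n m. g xs = p xs" unfolding polyish_def by blast
  have "\<forall>xs\<in>tuples n m. h xs = p xs" using p(2) gh by simp
  then show "polyish n m h" unfolding polyish_def using p(1) by blast
qed

lemma Bot_car[simp]: "Bot \<in> mn_carrier n" and Top_car[simp]: "Top \<in> mn_carrier n"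
  by (auto simp: mn_carrier_def)

lemma At_car[simp]: "At i \<in> mn_carrier n \<longleftrightarrow> 1 \<le> i \<and> i \<le> n"
  by (auto simp: mn_carrier_def)

lemma join_car: "x \<in> mn_carrier n \<Longrightarrow> y \<in> mn_carrier n \<Longrightarrow> mjoin x y \<in> mn_carrier n"
  by (cases x; cases y) simp_all
lemma meet_car: "x \<in> mn_carrier n \<Longrightarrow> y \<in> mn_carrier n \<Longrightarrow> mmeet x y \<in> mn_carrier n"
  by (cases x; cases y) simp_all

lemma polyish_foldr_join: "(\<And>a. a \<in> set L \<Longrightarrow> polyish n m (G a)) \<Longrightarrow>
   polyish n m (\<lambda>xs. foldr mjoin (map (\<lambda>a. G a xs) L) Bot)"
  by (induction L) (auto intro: polyish_const polyish_join)
lemma polyish_foldr_meet: "(\<And>a. a \<in> set L \<Longrightarrow> polyish n m (G a)) \<Longrightarrow>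
   polyish n m (\<lambda>xs. foldr mmeet (map (\<lambda>a. G a xs) L) Top)"
  by (induction L) (auto intro: polyish_const polyish_meet)

lemma chi_formula:
  assumes "x \<in> mn_carrier n" "j \<noteq> i" "k \<noteq> i" "j \<noteq> k"
  shows "chi (At i) x = mmeet (mjoin (mmeet x (At i)) (At j)) (mjoin (mmeet x (At i)) (At k))"
proof (cases x)
  case (At l)
  then show ?thesis using assms by (cases "l = i") (simp_all add: chi_def mleq_def)
qed (use assms in \<open>simp_all add: chi_def mleq_def\<close>)

lemma tuple_nth: "xs \<in> tuples n m \<Longrightarrow> l < m \<Longrightarrow> xs ! l \<in> mn_carrier n"
  unfolding tuples_def by auto

lemma polyish_chiAt:
  assumes n: "n \<ge> 3" and i: "1 \<le> i" "i \<le> n" and l: "l < m"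
  shows "polyish n m (\<lambda>xs. chi (At i) (xs ! l))"
proof -
  define j where "j = (if i = 1 then 2 else (1::nat))"
  define k where "k = (if i = 3 then 2 else (3::nat))"
  have jk: "j \<noteq> i" "k \<noteq> i" "j \<noteq> k" "At i \<in> mn_carrier n" "At j \<in> mn_carrier n" "At k \<in> mn_carrier n"
    using n i unfolding j_def k_def by auto
  have "polyish n m (\<lambda>xs. mmeet (mjoin (mmeet (xs ! l) (At i)) (At j)) (mjoin (mmeet (xs ! l) (At i)) (At k)))"
    using jk l by (intro polyish_meet polyish_join polyish_proj polyish_const) auto
  then show ?thesis
  proof (rule polyish_cong)
    fix xs assume "xs \<in> tuples n m"
    then have "xs ! l \<in> mn_carrier n" using tuple_nth l by blast
    from chi_formula[OF this jk(1-3)]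
    show "mmeet (mjoin (mmeet (xs ! l) (At i)) (At j)) (mjoin (mmeet (xs ! l) (At i)) (At k)) = chi (At i) (xs ! l)"
      by simp
  qed
qed

lemma polyish_chi:
  assumes n: "n \<ge> 3" and b: "b \<in> mn_carrier n" "b \<noteq> Bot" and l: "l < m"
  shows "polyish n m (\<lambda>xs. chi b (xs ! l))"
proof (cases b)
  case Top
  have "polyish n m (\<lambda>xs. mmeet (chi (At 1) (xs ! l)) (chi (At 2) (xs ! l)))"
    using n l by (intro polyish_meet polyish_chiAt) auto
  then show ?thesis
  proof (rule polyish_cong)
    fix xs assume "xs \<in> tuples n m"
    then have "xs ! l \<in> mn_carrier n" using tuple_nth l by blast
    then show "mmeet (chi (At 1) (xs ! l)) (chi (At 2) (xs ! l)) = chi b (xs ! l)"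
      using Top by (cases "xs ! l") (auto simp: chi_def mleq_def)
  qed
next
  case (At i)
  then show ?thesis using b n l polyish_chiAt[of n i l m] by simp
qed (use b in auto)

lemma foldr_meet_TB: "(\<And>z. h z \<in> {Top, Bot}) \<Longrightarrow>
  foldr mmeet (map h L) Top = (if \<forall>z\<in>set L. h z = Top then Top else Bot)"
proof (induction L)
  case Nil
  then show ?case by simp
next
  case (Cons a L)
  then show ?case using Cons.prems[of a] by (cases "h a") auto
qed

lemma foldr_join_eq:
  assumes "\<forall>z\<in>set L. mleq (h z) u" "z0 \<in> set L" "h z0 = u"
  shows "foldr mjoin (map h L) Bot = u"
proof -
  have a: "mleq (foldr mjoin (map h L) Bot) u" using assms(1)
    by (induction L) (auto intro: mjoin_lub)
  have b: "z \<in> set L \<Longrightarrow> mleq (h z) (foldr mjoin (map h L) Bot)" for z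
    by (induction L) (auto intro: mjoin_up1 mleq_trans[OF _ mjoin_up2])
  show ?thesis using a b[OF assms(2)] assms(3) mleq_antisym by auto
qed

lemma finite_car: "finite (mn_carrier n)"
proof -
  have "{At i |i. 1 \<le> i \<and> i \<le> n} = At ` {1..n}" by auto
  then show ?thesis unfolding mn_carrier_def by auto
qed

lemma finite_tuples: "finite (tuples n m)"
proof -
  have "tuples n m = {xs. set xs \<subseteq> mn_carrier n \<and> length xs = m}" unfolding tuples_def by auto
  then show ?thesis using finite_lists_length_eq[OF finite_car] by simp
qed

lemma pol_props: "p \<in> pol n m \<Longrightarrow> (\<forall>xs\<in>tuples n m. p xs \<in> mn_carrier n) \<and>
   (\<forall>xs\<in>tuples n m. \<forall>ys\<in>tuples n m. tleq xs ys \<longrightarrow> mleq (p xs) (p ys))"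
proof (induction rule: pol.induct)
  case (proj i)
  then show ?case by (auto simp: tuples_def tleq_def)
next
  case (const c)
  then show ?case by (auto simp: mleq_refl)
next
  case (join p q)
  then show ?case by (simp add: join_car mjoin_mono)
next
  case (meet p q)
  then show ?case by (simp add: meet_car mmeet_mono)
qed

lemma rep_tuples: "x \<in> mn_carrier n \<Longrightarrow> replicate m x \<in> tuples n m"
  by (auto simp: tuples_def)

lemma pol01_agg: "pol01 n m f \<Longrightarrow> aggregation n m f"
proof -
  assume "pol01 n m f"
  then obtain p where p: "p \<in> pol n m" "\<forall>xs\<in>tuples n m. f xs = p xs"
    and "f (replicate m Bot) = Bot" "f (replicate m Top) = Top" unfolding pol01_def by blast
  then show ?thesis using pol_props[OF p(1)] unfolding aggregation_def by auto
qed

lemma agg_pol01: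
  assumes n: "n \<ge> 3" and agg: "aggregation n m f"
  shows "pol01 n m f"
proof -
  obtain L where L: "set L = tuples n m" using finite_list[OF finite_tuples] by blast
  define c where "c b y = (if b = Bot then Top else chi b y)" for b y
  define C where "C a xs = foldr mmeet (map (\<lambda>l. c (a!l) (xs!l)) [0..<m]) Top" for a xs
  define G where "G a xs = mmeet (f a) (C a xs)" for a xs
  define H where "H xs = foldr mjoin (map (\<lambda>a. G a xs) L) Bot" for xs
  have mono: "\<And>a b. a \<in> tuples n m \<Longrightarrow> b \<in> tuples n m \<Longrightarrow> tleq a b \<Longrightarrow> mleq (f a) (f b)"
    using agg unfolding aggregation_def by blast
  have fcar: "a \<in> tuples n m \<Longrightarrow> f a \<in> mn_carrier n" for a using agg unfolding aggregation_def by auto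
  have pc: "a \<in> tuples n m \<Longrightarrow> l < m \<Longrightarrow> polyish n m (\<lambda>xs. c (a!l) (xs!l))" for a l
    unfolding c_def using polyish_chi[OF n tuple_nth] polyish_const[OF Top_car]
    by (cases "a!l = Bot") auto
  have "polyish n m H" unfolding H_def G_def C_def L[symmetric]
    by (intro polyish_foldr_join polyish_meet polyish_const fcar polyish_foldr_meet pc) (auto simp: L)
  have cTB: "c b y \<in> {Top, Bot}" for b y by (auto simp: c_def chi_def)
  have cT: "c b y = (if mleq b y then Top else Bot)" for b y
    by (cases b; cases y) (auto simp: c_def chi_def mleq_def)
  have CC: "length a = m \<Longrightarrow> length xs = m \<Longrightarrow> C a xs = (if tleq a xs then Top else Bot)" for a xs
    unfolding C_def by (subst foldr_meet_TB) (auto simp: cT tleq_def)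
  have "f xs = H xs" if xs: "xs \<in> tuples n m" for xs
  proof -
    have "H xs = f xs" unfolding H_def
    proof (rule foldr_join_eq)
      show "\<forall>z\<in>set L. mleq (G z xs) (f xs)"
      proof
        fix z assume "z \<in> set L"
        then have z: "z \<in> tuples n m" using L by auto
        have lz: "length z = m" "length xs = m" using z xs by (auto simp: tuples_def)
        show "mleq (G z xs) (f xs)"
        proof (cases "tleq z xs")
          case True
          then show ?thesis using mono[OF z xs] CC[OF lz] unfolding G_def by simp
        next
          case False
          then show ?thesis using CC[OF lz] unfolding G_def by simp
        qed
      qed
      show "xs \<in> set L" using L xs by auto
      have lx: "length xs = m" using xs by (auto simp: tuples_def)
      have "tleq xs xs" by (simp add: tleq_def mleq_refl)
      then show "G xs xs = f xs" using CC[OF lx lx] unfolding G_def by simp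
    qed
    then show ?thesis by simp
  qed
  then have "polyish n m f" using \<open>polyish n m H\<close> polyish_cong by metis
  then show ?thesis using agg unfolding pol01_def aggregation_def polyish_def by blast
qed

theorem mainTheorem9:
  fixes n :: nat
  assumes "n \<ge> 3"
  shows "(\<forall>i j k x. i \<in> {1..n} \<and> j \<in> {1..n} \<and> k \<in> {1..n} \<and> j \<noteq> i \<and> k \<noteq> i \<and> j \<noteq> k
            \<and> x \<in> mn_carrier n \<longrightarrow>
            chi (At i) x = mmeet (mjoin (mmeet x (At i)) (At j)) (mjoin (mmeet x (At i)) (At k)))
       \<and> (\<forall>m \<ge> 1. \<forall>f. aggregation n m f \<longleftrightarrow> pol01 n m f)"
proof (intro conjI allI impI)
  fix i j k x
  assume "i \<in> {1..n} \<and> j \<in> {1..n} \<and> k \<in> {1..n} \<and> j \<noteq> i \<and> k \<noteq> i \<and> j \<noteq> k \<and> x \<in> mn_carrier n"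
  then show "chi (At i) x = mmeet (mjoin (mmeet x (At i)) (At j)) (mjoin (mmeet x (At i)) (At k))"
    using chi_formula by blast
next
  fix m :: nat and f
  show "aggregation n m f \<longleftrightarrow> pol01 n m f" using agg_pol01[OF assms] pol01_agg by blast
qed

end
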